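(* Let $\beta,\mu,\tau>0$ be constants, let $g(x)=\dfrac{g^-\theta_g^n+g^+x^n}{\theta_g^n+x^n}$ with $g^\pm,\theta_g,n>0$, and put $g_0=\min\{g^-,g^+\}$, $g_U=\max\{g^-,g^+\}$. For $\xi>0$ let $\gamma=\gamma(\xi)=\frac{\beta}{\xi}e^{-\mu\tau}g(\xi)$, let $k\ge0$ be an integer and let $\omega_k>0$ satisfy $\omega_k\cot(\omega_k\tau)=-\gamma$ and $\omega_k\tau\in(\pi/2+2k\pi,\pi+2k\pi)$. Let $s_k(\xi)=\sqrt{1+(\omega_k/\gamma)^2}$. Then for all $\xi>0$: (1) $m_k(\xi)\le s_k(\xi)\le M_k(\xi)$, where $$m_k(\xi)=\Big(1+\Big(\frac{\pi(2k+1/2)}{\beta\tau e^{-\mu\tau}g_U}\Big)^2\xi^2\Big)^{1/2},\qquad M_k(\xi)=\Big(1+\Big(\frac{\pi(2k+1)}{\beta\tau e^{-\mu\tau}g_0}\Big)^2\xi^2\Big)^{1/2};$$ (2) $1<s_k(\xi)<1+\frac{\pi(2k+1)}{\beta\tau e^{-\mu\tau}g_0}\,\xi$. *)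

theory Defs
  imports Complex_Main
begin

definition hill_g :: "real \<Rightarrow> real \<Rightarrow> real \<Rightarrow> real \<Rightarrow> real \<Rightarrow> real" where
  "hill_g gm gp thg n x = (gm * thg powr n + gp * x powr n) / (thg powr n + x powr n)"

end

theory Submission
  imports Defs
begin

lemma convex_bounds:
  fixes a b x y :: real
  assumes "a > 0" "b > 0"
  shows "min x y \<le> (x * a + y * b) / (a + b)" "(x * a + y * b) / (a + b) \<le> max x y"
proof -
  have "min x y * (a + b) \<le> x * a + y * b"
    using assms by (simp add: distrib_left mult_right_mono add_mono)
  then show "min x y \<le> (x * a + y * b) / (a + b)" using assms by (simp add: pos_le_divide_eq)
  have "x * a + y * b \<le> max x y * (a + b)"
    using assms by (simp add: distrib_left mult_right_mono add_mono)
  then show "(x * a + y * b) / (a + b) \<le> max x y" using assms by (simp add: pos_divide_le_eq)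
qed

lemma sqrt_lt_1_plus:
  fixes X :: real assumes "X > 0" shows "sqrt (1 + X\<^sup>2) < 1 + X"
proof -
  have "1 + X\<^sup>2 < (1 + X)\<^sup>2" using assms by (simp add: power2_eq_square algebra_simps)
  then show ?thesis using assms
    by (metis abs_of_pos add_pos_pos real_sqrt_abs real_sqrt_less_iff zero_less_one)
qed

theorem proposition5p2:
  fixes \<beta> \<mu> \<tau> gm gp thg n \<xi> \<omega> :: real and k :: nat
  assumes "\<beta> > 0" "\<mu> > 0" "\<tau> > 0"
    and "gm > 0" "gp > 0" "thg > 0" "n > 0"
    and "\<xi> > 0"
    and "\<omega> > 0"
    and "\<omega> * cot (\<omega> * \<tau>) = - (\<beta> / \<xi> * exp (- \<mu> * \<tau>) * hill_g gm gp thg n \<xi>)"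
    and "pi / 2 + 2 * real k * pi < \<omega> * \<tau>" "\<omega> * \<tau> < pi + 2 * real k * pi"
  shows
    "let g0 = min gm gp; gU = max gm gp;
         \<gamma> = \<beta> / \<xi> * exp (- \<mu> * \<tau>) * hill_g gm gp thg n \<xi>;
         s = sqrt (1 + (\<omega> / \<gamma>)\<^sup>2);
         m = sqrt (1 + (pi * (2 * real k + 1/2) / (\<beta> * \<tau> * exp (- \<mu> * \<tau>) * gU))\<^sup>2 * \<xi>\<^sup>2);
         M = sqrt (1 + (pi * (2 * real k + 1) / (\<beta> * \<tau> * exp (- \<mu> * \<tau>) * g0))\<^sup>2 * \<xi>\<^sup>2)
     in (m \<le> s \<and> s \<le> M) \<and>
        (1 < s \<and> s < 1 + pi * (2 * real k + 1) / (\<beta> * \<tau> * exp (- \<mu> * \<tau>) * g0) * \<xi>)"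
proof -
  define G where "G = hill_g gm gp thg n \<xi>"
  define c where "c = \<beta> * exp (- \<mu> * \<tau>)"
  define g0 where "g0 = min gm gp"
  define gU where "gU = max gm gp"
  have c: "c > 0" using assms by (simp add: c_def)
  have g0: "g0 > 0" "g0 \<le> G" and gU: "G \<le> gU"
    using convex_bounds[of "thg powr n" "\<xi> powr n" gm gp] assms
    by (auto simp: G_def g0_def gU_def hill_g_def)
  have G: "G > 0" using g0 by linarith
  define r where "r = \<omega> * \<xi> / (c * G)"
  have req: "\<omega> / (\<beta> / \<xi> * exp (- \<mu> * \<tau>) * G) = r"
    using assms c G by (simp add: r_def c_def field_simps)
  define A where "A = pi * (2 * real k + 1/2) / (\<beta> * \<tau> * exp (- \<mu> * \<tau>) * gU) * \<xi>"
  define B where "B = pi * (2 * real k + 1) / (\<beta> * \<tau> * exp (- \<mu> * \<tau>) * g0) * \<xi>"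
  have A0: "A > 0" using assms g0 gU by (simp add: A_def)
  have r0: "r > 0" using assms c G by (simp add: r_def)
  have w1: "pi * (2 * real k + 1/2) \<le> \<omega> * \<tau>" using assms(11) by (simp add: algebra_simps)
  have w2: "\<omega> * \<tau> \<le> pi * (2 * real k + 1)" using assms(12) by (simp add: algebra_simps)
  have "A = pi * (2 * real k + 1/2) * \<xi> / (\<tau> * c * gU)" by (simp add: A_def c_def field_simps)
  also have "\<dots> \<le> (\<omega> * \<tau>) * \<xi> / (\<tau> * c * G)"
    using w1 gU G c assms
    by (intro frac_le mult_right_mono mult_left_mono) auto
  also have "\<dots> = r" using assms by (simp add: r_def)
  finally have Ar: "A \<le> r" .
  have "r = (\<omega> * \<tau>) * \<xi> / (\<tau> * c * G)" using assms by (simp add: r_def)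
  also have "\<dots> \<le> pi * (2 * real k + 1) * \<xi> / (\<tau> * c * g0)"
    using w2 g0 G c assms
    by (intro frac_le mult_right_mono mult_left_mono) auto
  also have "\<dots> = B" by (simp add: B_def c_def field_simps)
  finally have rB: "r \<le> B" .
  have sq1: "A\<^sup>2 \<le> r\<^sup>2" using Ar A0 by (simp add: power_mono)
  have sq2: "r\<^sup>2 \<le> B\<^sup>2" using rB r0 by (simp add: power_mono)
  have m_eq: "(pi * (2 * real k + 1/2) / (\<beta> * \<tau> * exp (- \<mu> * \<tau>) * gU))\<^sup>2 * \<xi>\<^sup>2 = A\<^sup>2"
    by (simp add: A_def power_mult_distrib power_divide)
  have M_eq: "(pi * (2 * real k + 1) / (\<beta> * \<tau> * exp (- \<mu> * \<tau>) * g0))\<^sup>2 * \<xi>\<^sup>2 = B\<^sup>2"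
    by (simp add: B_def power_mult_distrib power_divide)
  have s1: "1 < sqrt (1 + r\<^sup>2)" using r0 by simp
  have s2: "sqrt (1 + r\<^sup>2) < 1 + B"
    using sqrt_lt_1_plus[of B] rB r0 sq2 by (meson add_le_cancel_left le_less_trans real_sqrt_le_iff less_le_trans)
  show ?thesis
    unfolding Let_def G_def[symmetric] g0_def[symmetric] gU_def[symmetric] req m_eq M_eq
    using sq1 sq2 s1 s2 by (simp add: B_def)
qed

end
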